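(* Let $\gamma:I\to\mathcal S$ be a Legendrian curve whose stress density vanishes identically, and let $t_*\in I$ with $a(t_* )=0$. Then $a^{(n)}(t_* )=0$ for every $n\ge0$.
   Context: Let $\mathbb C^{2,1}$ denote $\mathbb C^3$ with the pseudo-Hermitian form $\langle z,w\rangle=i(\bar z^1w^3-\bar z^3w^1)+\bar z^2w^2$ (conjugate-linear in the first slot); $\mathcal S=\{[z]\in\mathbb{CP}^2:\langle z,z\rangle=0\}$ with contact distribution $\ker\zeta$, $\zeta=-\frac{i}{\bar z^tz}\langle z,dz\rangle|_{T\mathcal S}$. A Legendrian curve is a smooth immersion $\gamma:I\to\mathcal S$ tangent to the contact distribution. A normalized lift is a smooth $\Gamma:I\to\mathbb C^3\setminus\{0\}$ with $\gamma=[\Gamma]$ and $\det(\Gamma,\Gamma',\Gamma'')=i$. The Fubini densities are $a=\mathrm{Im}\langle\Gamma''',\Gamma''\rangle$, $b=\frac12\langle\Gamma'',\Gamma''\rangle$ (independent of the normalized lift). The stress density is $$\begin{aligned}\mathtt t=&\tfrac{4400}{81}aa'^3a''+a^2\big(-\tfrac{400}{27}ba'^3-\tfrac{200}{9}a'a''^2-\tfrac{400}{27}a'^2a'''\big)+a^3\big(\tfrac{25}{3}a'^2b'+\tfrac{50}{3}ba'a''+\tfrac{50}{9}a''a'''+\tfrac{25}{9}a'a^{(4)}\big)\\&+a^4\big(-\tfrac{16}{3}b^2a'-5b'a''-3a'b''-\tfrac{10}{3}ba'''-\tfrac13a^{(5)}\big)+a^5\big(8bb'+b'''\big)-\tfrac{6160}{243}a'^5.\end{aligned}$$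 *)

theory Defs
  imports "HOL-Analysis.Analysis"
begin

text \<open>The pseudo-Hermitian form of signature (2,1) on C^3, conjugate-linear in the first slot:
  <z,w> = i (conj z1 w3 - conj z3 w1) + conj z2 w2.\<close>
definition herm21 :: "complex^3 \<Rightarrow> complex^3 \<Rightarrow> complex" where
  "herm21 z w = \<i> * (cnj (z$1) * w$3 - cnj (z$3) * w$1) + cnj (z$2) * w$2"

definition vd :: "(real \<Rightarrow> 'a::real_normed_vector) \<Rightarrow> real \<Rightarrow> 'a" where
  "vd f = (\<lambda>t. vector_derivative f (at t))"

definition smooth_curve_on :: "real set \<Rightarrow> (real \<Rightarrow> 'a::real_normed_vector) \<Rightarrow> bool" where
  "smooth_curve_on I f \<longleftrightarrow>
     (\<forall>n. \<forall>t\<in>I. ((vd ^^ n) f has_vector_derivative (vd ^^ Suc n) f t) (at t))"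

text \<open>Gamma is a smooth lift (into C^3 minus 0) of a Legendrian curve in the null cone S:
  <Gamma,Gamma> = 0 and the curve is tangent to the contact distribution, i.e. <Gamma,Gamma'> = 0.\<close>
definition legendrian_lift :: "real set \<Rightarrow> (real \<Rightarrow> complex^3) \<Rightarrow> bool" where
  "legendrian_lift I \<Gamma> \<longleftrightarrow> smooth_curve_on I \<Gamma> \<and>
     (\<forall>t\<in>I. \<Gamma> t \<noteq> 0 \<and> herm21 (\<Gamma> t) (\<Gamma> t) = 0 \<and> herm21 (\<Gamma> t) (vd \<Gamma> t) = 0)"

definition normalized_lift :: "real set \<Rightarrow> (real \<Rightarrow> complex^3) \<Rightarrow> bool" where
  "normalized_lift I \<Gamma> \<longleftrightarrow> legendrian_lift I \<Gamma> \<and>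
     (\<forall>t\<in>I. det (transpose (vector [\<Gamma> t, vd \<Gamma> t, (vd ^^ 2) \<Gamma> t] :: complex^3^3)) = \<i>)"

definition fubini_a :: "(real \<Rightarrow> complex^3) \<Rightarrow> real \<Rightarrow> real" where
  "fubini_a \<Gamma> t = Im (herm21 ((vd ^^ 3) \<Gamma> t) ((vd ^^ 2) \<Gamma> t))"

definition fubini_b :: "(real \<Rightarrow> complex^3) \<Rightarrow> real \<Rightarrow> real" where
  "fubini_b \<Gamma> t = Re (herm21 ((vd ^^ 2) \<Gamma> t) ((vd ^^ 2) \<Gamma> t)) / 2"

definition stress :: "(real \<Rightarrow> real) \<Rightarrow> (real \<Rightarrow> real) \<Rightarrow> real \<Rightarrow> real" where
  "stress a b t = (let
      a0 = a t; a1 = deriv a t; a2 = (deriv ^^ 2) a t; a3 = (deriv ^^ 3) a t;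
      a4 = (deriv ^^ 4) a t; a5 = (deriv ^^ 5) a t;
      b0 = b t; b1 = deriv b t; b2 = (deriv ^^ 2) b t; b3 = (deriv ^^ 3) b t in
      4400/81 * a0 * a1^3 * a2
    + a0^2 * (- 400/27 * b0 * a1^3 - 200/9 * a1 * a2^2 - 400/27 * a1^2 * a3)
    + a0^3 * (25/3 * a1^2 * b1 + 50/3 * b0 * a1 * a2 + 50/9 * a2 * a3 + 25/9 * a1 * a4)
    + a0^4 * (- 16/3 * b0^2 * a1 - 5 * b1 * a2 - 3 * a1 * b2 - 10/3 * b0 * a3 - 1/3 * a5)
    + a0^5 * (8 * b0 * b1 + b3)
    - 6160/243 * a1^5)"

end

theory Submission
  imports Defs
begin


lemma vnth_deriv:
  "(f has_vector_derivative f') (at t) \<Longrightarrow> ((\<lambda>t. f t $ i) has_vector_derivative f' $ i) (at t)"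
  by (rule bounded_linear.has_vector_derivative[OF bounded_linear_vec_nth])

lemma herm_deriv:
  assumes f: "(f has_vector_derivative f') (at t)" and g: "(g has_vector_derivative g') (at t)"
  shows "((\<lambda>t. herm21 (f t) (g t)) has_vector_derivative herm21 f' (g t) + herm21 (f t) g') (at t)"
proof -
  note d = vnth_deriv[OF f] vnth_deriv[OF g]
  have "((\<lambda>t. \<i> * (cnj (f t $ 1) * g t $ 3 - cnj (f t $ 3) * g t $ 1) + cnj (f t $ 2) * g t $ 2)
     has_vector_derivative
      \<i> * ((cnj (f t $ 1) * g' $ 3 + cnj (f' $ 1) * g t $ 3) - (cnj (f t $ 3) * g' $ 1 + cnj (f' $ 3) * g t $ 1))
      + (cnj (f t $ 2) * g' $ 2 + cnj (f' $ 2) * g t $ 2)) (at t)"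
    by (intro derivative_intros has_vector_derivative_cnj d)
  then show ?thesis unfolding herm21_def by (simp add: algebra_simps)
qed

definition HH :: "(real \<Rightarrow> complex^3) \<Rightarrow> nat \<Rightarrow> nat \<Rightarrow> real \<Rightarrow> complex" where
  "HH \<Gamma> p q t = herm21 ((vd^^p) \<Gamma> t) ((vd^^q) \<Gamma> t)"

definition Rep :: "(real \<Rightarrow> complex^3) \<Rightarrow> (complex \<times> nat \<times> nat) list \<Rightarrow> real \<Rightarrow> complex" where
  "Rep \<Gamma> xs t = (\<Sum>(c,p,q)\<leftarrow>xs. c * HH \<Gamma> p q t)"

definition Dl :: "(complex \<times> nat \<times> nat) list \<Rightarrow> (complex \<times> nat \<times> nat) list" where
  "Dl xs = concat (map (\<lambda>(c,p,q). [(c,Suc p,q),(c,p,Suc q)]) xs)"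

lemma HH_deriv:
  assumes "smooth_curve_on I \<Gamma>" "t \<in> I"
  shows "(HH \<Gamma> p q has_vector_derivative HH \<Gamma> (Suc p) q t + HH \<Gamma> p (Suc q) t) (at t)"
proof -
  have "((vd ^^ n) \<Gamma> has_vector_derivative (vd ^^ Suc n) \<Gamma> t) (at t)" for n
    using assms unfolding smooth_curve_on_def by blast
  from herm_deriv[OF this this, of p q] show ?thesis
    unfolding HH_def[abs_def] by simp
qed

lemma Rep_deriv:
  assumes "smooth_curve_on I \<Gamma>" "t \<in> I"
  shows "(Rep \<Gamma> xs has_vector_derivative Rep \<Gamma> (Dl xs) t) (at t)"
proof (induction xs)
  case Nil
  then show ?case by (simp add: Rep_def[abs_def] Dl_def)
next
  case (Cons x xs)
  obtain c p q where x: "x = (c,p,q)" by (cases x) auto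
  have e1: "Rep \<Gamma> (x # xs) = (\<lambda>t. c * HH \<Gamma> p q t + Rep \<Gamma> xs t)"
    by (simp add: Rep_def x fun_eq_iff)
  have e2: "Rep \<Gamma> (Dl (x # xs)) t = c * (HH \<Gamma> (Suc p) q t + HH \<Gamma> p (Suc q) t) + Rep \<Gamma> (Dl xs) t"
    by (simp add: Rep_def Dl_def x algebra_simps)
  show ?case unfolding e1 e2
    by (intro derivative_intros HH_deriv[OF assms] Cons)
qed

lemma smooth_real:
  fixes F :: "nat \<Rightarrow> real \<Rightarrow> real"
  assumes "open I" and D: "\<And>k t. t \<in> I \<Longrightarrow> (F k has_real_derivative F (Suc k) t) (at t)"
    and f: "\<And>t. t \<in> I \<Longrightarrow> f t = F 0 t"
  shows "t \<in> I \<Longrightarrow> (deriv ^^ n) f t = F n t"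
proof (induction n arbitrary: t)
  case 0 then show ?case using f by simp
next
  case (Suc n)
  have "((deriv ^^ n) f has_real_derivative F (Suc n) t) (at t)"
    by (rule has_field_derivative_transform_within_open[OF D[OF Suc.prems] \<open>open I\<close> Suc.prems])
       (simp add: Suc.IH)
  then show ?case by (simp add: DERIV_imp_deriv)
qed

lemma smooth_real':
  fixes F :: "nat \<Rightarrow> real \<Rightarrow> real"
  assumes "open I" and D: "\<And>k t. t \<in> I \<Longrightarrow> (F k has_real_derivative F (Suc k) t) (at t)"
    and f: "\<And>t. t \<in> I \<Longrightarrow> f t = F 0 t" and t: "t \<in> I"
  shows "((deriv ^^ n) f has_real_derivative (deriv ^^ Suc n) f t) (at t)"
proof -
  have "((deriv ^^ n) f has_real_derivative F (Suc n) t) (at t)"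
    by (rule has_field_derivative_transform_within_open[OF D[OF t] \<open>open I\<close> t])
       (simp add: smooth_real[OF assms(1-3)])
  then show ?thesis using smooth_real[OF assms(1-3) t, of "Suc n"] by simp
qed

lemma Im_deriv: "(g has_vector_derivative g') (at t) \<Longrightarrow> ((\<lambda>t. Im (g t)) has_real_derivative Im g') (at t)"
  unfolding has_real_derivative_iff_has_vector_derivative
  by (drule bounded_linear.has_vector_derivative[OF bounded_linear_Im]) simp

lemma Re_deriv: "(g has_vector_derivative g') (at t) \<Longrightarrow> ((\<lambda>t. Re (g t)) has_real_derivative Re g') (at t)"
  unfolding has_real_derivative_iff_has_vector_derivative
  by (drule bounded_linear.has_vector_derivative[OF bounded_linear_Re]) simp

lemma a_smooth:
  assumes "open I" "smooth_curve_on I \<Gamma>" "t \<in> I"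
  shows "((deriv ^^ n) (fubini_a \<Gamma>) has_real_derivative (deriv ^^ Suc n) (fubini_a \<Gamma>) t) (at t)"
proof (rule smooth_real'[OF assms(1) _ _ assms(3), where F = "\<lambda>k t. Im (Rep \<Gamma> ((Dl^^k) [(1,3,2)]) t)"])
  fix k t assume "t \<in> I"
  show "((\<lambda>t. Im (Rep \<Gamma> ((Dl ^^ k) [(1, 3, 2)]) t)) has_real_derivative Im (Rep \<Gamma> ((Dl ^^ Suc k) [(1, 3, 2)]) t)) (at t)"
    using Im_deriv[OF Rep_deriv[OF assms(2) \<open>t\<in>I\<close>]] by simp
next
  fix t show "fubini_a \<Gamma> t = Im (Rep \<Gamma> ((Dl ^^ 0) [(1, 3, 2)]) t)"
    by (simp add: fubini_a_def Rep_def HH_def numeral_eq_Suc)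
qed

lemma b_smooth:
  assumes "open I" "smooth_curve_on I \<Gamma>" "t \<in> I"
  shows "((deriv ^^ n) (fubini_b \<Gamma>) has_real_derivative (deriv ^^ Suc n) (fubini_b \<Gamma>) t) (at t)"
proof (rule smooth_real'[OF assms(1) _ _ assms(3), where F = "\<lambda>k t. Re (Rep \<Gamma> ((Dl^^k) [(1/2,2,2)]) t)"])
  fix k t assume "t \<in> I"
  show "((\<lambda>t. Re (Rep \<Gamma> ((Dl ^^ k) [(1/2, 2, 2)]) t)) has_real_derivative Re (Rep \<Gamma> ((Dl ^^ Suc k) [(1/2, 2, 2)]) t)) (at t)"
    using Re_deriv[OF Rep_deriv[OF assms(2) \<open>t\<in>I\<close>]] by simp
next
  fix t show "fubini_b \<Gamma> t = Re (Rep \<Gamma> ((Dl ^^ 0) [(1/2, 2, 2)]) t)"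
    by (simp add: fubini_b_def Rep_def HH_def numeral_eq_Suc)
qed



definition stressE :: "real \<Rightarrow> real \<Rightarrow> real \<Rightarrow> real \<Rightarrow> real \<Rightarrow> real \<Rightarrow> real \<Rightarrow> real \<Rightarrow> real \<Rightarrow> real \<Rightarrow> real" where
  "stressE a0 a1 a2 a3 a4 a5 b0 b1 b2 b3 =
      4400/81 * a0 * a1^3 * a2
    + a0^2 * (- 400/27 * b0 * a1^3 - 200/9 * a1 * a2^2 - 400/27 * a1^2 * a3)
    + a0^3 * (25/3 * a1^2 * b1 + 50/3 * b0 * a1 * a2 + 50/9 * a2 * a3 + 25/9 * a1 * a4)
    + a0^4 * (- 16/3 * b0^2 * a1 - 5 * b1 * a2 - 3 * a1 * b2 - 10/3 * b0 * a3 - 1/3 * a5)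
    + a0^5 * (8 * b0 * b1 + b3)
    - 6160/243 * a1^5"

lemma stress_eq: "stress a b t = stressE ((deriv^^0) a t) ((deriv^^1) a t) ((deriv^^2) a t) ((deriv^^3) a t)
   ((deriv^^4) a t) ((deriv^^5) a t) ((deriv^^0) b t) ((deriv^^1) b t) ((deriv^^2) b t) ((deriv^^3) b t)"
  by (simp add: stress_def stressE_def Let_def)

definition pureE :: "real \<Rightarrow> real \<Rightarrow> real \<Rightarrow> real \<Rightarrow> real \<Rightarrow> real \<Rightarrow> real" where
  "pureE u0 u1 u2 u3 u4 u5 = 4400/81 * u0 * u1^3 * u2 - 200/9 * u0^2 * u1 * u2^2 - 400/27 * u0^2 * u1^2 * u3
     + 50/9 * u0^3 * u2 * u3 + 25/9 * u0^3 * u1 * u4 - 1/3 * u0^4 * u5 - 6160/243 * u1^5"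

definition PsiE :: "real \<Rightarrow> real \<Rightarrow> real \<Rightarrow> real \<Rightarrow> real \<Rightarrow> real \<Rightarrow> real \<Rightarrow> real \<Rightarrow> real \<Rightarrow> real \<Rightarrow> real \<Rightarrow> real" where
  "PsiE u0 u1 u2 u3 u4 u5 b0 b1 b2 b3 s = pureE u0 u1 u2 u3 u4 u5
     + s^2 * (-400/27 * u0^2 * b0 * u1^3) + s^3 * (25/3 * u0^3 * u1^2 * b1) + s^2 * (50/3 * u0^3 * b0 * u1 * u2)
     + s^4 * (-16/3 * u0^4 * b0^2 * u1) + s^3 * (-5 * u0^4 * b1 * u2) + s^4 * (-3 * u0^4 * u1 * b2)
     + s^2 * (-10/3 * u0^4 * b0 * u3) + s^5 * (u0^5 * (8 * b0 * b1 + b3))"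

lemma stress_alg:
  fixes s S :: real assumes "s \<noteq> 0"
  shows "stressE (u0*S) (u1*S/s) (u2*S/s^2) (u3*S/s^3) (u4*S/s^4) (u5*S/s^5) b0 b1 b2 b3 * s^5
     = S^5 * PsiE u0 u1 u2 u3 u4 u5 b0 b1 b2 b3 s"
  using assms
  unfolding stressE_def PsiE_def pureE_def
  by (simp add: field_simps power2_eq_square power3_eq_cube) (simp add: algebra_simps power2_eq_square power3_eq_cube power_numeral_reduce)

lemma pure_val:
  fixes c m :: real
  shows "pureE c (c*m) (c*(m*(m-1))) (c*(m*(m-1)*(m-2))) (c*(m*(m-1)*(m-2)*(m-3))) (c*(m*(m-1)*(m-2)*(m-3)*(m-4)))
    = -(c^5 * (8*m + 100/9*m^2 + 140/27*m^3 + 80/81*m^4 + 16/243*m^5))"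
  unfolding pureE_def by algebra



lemma ff_fact:
  fixes m j :: nat assumes "j \<le> m"
  shows "fact m = fact (m - j) * (\<Prod>i<j. (real m - real i))"
  using assms
proof (induction j)
  case 0 then show ?case by simp
next
  case (Suc j)
  have "m - j = Suc (m - Suc j)" using Suc.prems by simp
  then have h: "fact (m - j) = fact (m - Suc j) * (real m - real j)"
    using Suc.prems by (simp add: of_nat_diff)
  have "fact m = fact (m - j) * (\<Prod>i<j. (real m - real i))" using Suc by simp
  also have "\<dots> = fact (m - Suc j) * ((\<Prod>i<j. (real m - real i)) * (real m - real j))"
    unfolding h by (simp add: mult_ac)
  finally show ?case by (simp add: prod.lessThan_Suc)
qed

lemma Lv_eq:
  fixes m j :: nat and A :: real
  shows "(if j \<le> m then A / fact (m - j) else 0) = A / fact m * (\<Prod>i<j. (real m - real i))"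
proof (cases "j \<le> m")
  case True
  then show ?thesis using ff_fact[OF True] by (simp add: field_simps)
next
  case False
  then have "(\<Prod>i<j. (real m - real i)) = 0"
    using False by (intro prod_zero) auto
  then show ?thesis using False by (simp add: power_0_left)
qed

theorem mainTheorem5:
  fixes I :: "real set" and \<Gamma> :: "real \<Rightarrow> complex^3" and t0 :: real
  assumes "open I" and "is_interval I"
    and "normalized_lift I \<Gamma>"
    and "\<forall>t\<in>I. stress (fubini_a \<Gamma>) (fubini_b \<Gamma>) t = 0"
    and "t0 \<in> I" and "fubini_a \<Gamma> t0 = 0"
  shows "\<forall>n. (deriv ^^ n) (fubini_a \<Gamma>) t0 = 0"
proof (rule ccontr)
  define a where "a = fubini_a \<Gamma>"
  define b where "b = fubini_b \<Gamma>"
  define D where "D n = (deriv ^^ n) a" for n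
  define B where "B n = (deriv ^^ n) b" for n
  have sm: "smooth_curve_on I \<Gamma>" using assms(3) unfolding normalized_lift_def legendrian_lift_def by blast
  have aD: "\<And>n t. t \<in> I \<Longrightarrow> (D n has_real_derivative D (Suc n) t) (at t)"
    unfolding D_def a_def by (rule a_smooth[OF assms(1) sm])
  have bD: "\<And>n t. t \<in> I \<Longrightarrow> (B n has_real_derivative B (Suc n) t) (at t)"
    unfolding B_def b_def by (rule b_smooth[OF assms(1) sm])
  have Dc: "isCont (D n) t0" for n using aD[OF assms(5)] by (rule DERIV_isCont)
  have Bc: "isCont (B n) t0" for n using bD[OF assms(5)] by (rule DERIV_isCont)
  assume "\<not> (\<forall>n. (deriv ^^ n) (fubini_a \<Gamma>) t0 = 0)"
  then obtain n0 where n0: "D n0 t0 \<noteq> 0" unfolding D_def a_def by blast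
  define m where "m = (LEAST n. D n t0 \<noteq> 0)"
  have Dm: "D m t0 \<noteq> 0" unfolding m_def using n0 by (rule LeastI)
  have below: "D k t0 = 0" if "k < m" for k using not_less_Least[OF that[unfolded m_def]] by blast
  have "D 0 t0 = 0" using assms(6) by (simp add: D_def a_def)
  then have m0: "m > 0" using Dm by (cases m) auto
  obtain e where e: "e > 0" "ball t0 e \<subseteq> I" using assms(1,5) open_contains_ball by blast
  define A where "A = D m t0"
  define c where "c = A / fact m"
  have cnz: "c \<noteq> 0" using Dm by (simp add: c_def A_def)
  define u where "u j x = D j x * (x - t0)^j / (x - t0)^m" for j x
  have tay: "\<exists>\<xi>. \<xi> \<noteq> t0 \<and> \<bar>\<xi> - t0\<bar> \<le> \<bar>x - t0\<bar> \<and> D j x = D m \<xi> / fact (m - j) * (x - t0)^(m - j)"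
    if j: "j \<le> m" and x: "x \<in> ball t0 e" "x \<noteq> t0" for j x
  proof (cases "j = m")
    case True then show ?thesis using x by (intro exI[of _ x]) auto
  next
    case False
    then have jm: "j < m" using j by simp
    have "\<exists>t. (if x < t0 then x < t \<and> t < t0 else t0 < t \<and> t < x) \<and>
      D j x = (\<Sum>k<m-j. (D (j+k) t0 / fact k) * (x - t0)^k) + (D (j + (m-j)) t / fact (m-j)) * (x - t0)^(m-j)"
    proof (rule Taylor[where diff = "\<lambda>k. D (j+k)" and a = "min x t0" and b = "max x t0"])
      show "0 < m - j" using jm by simp
      show "D (j + 0) = D j" by simp
      show "\<forall>k t. k < m - j \<and> min x t0 \<le> t \<and> t \<le> max x t0 \<longrightarrow>
          (D (j + k) has_real_derivative D (j + Suc k) t) (at t)"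
      proof (intro allI impI)
        fix k t assume "k < m - j \<and> min x t0 \<le> t \<and> t \<le> max x t0"
        then have "t \<in> ball t0 e" using x by (auto simp: dist_real_def)
        then have "t \<in> I" using e by blast
        from aD[OF this, of "j+k"] show "(D (j + k) has_real_derivative D (j + Suc k) t) (at t)" by simp
      qed
    qed (use x in auto)
    then obtain t where t: "(if x < t0 then x < t \<and> t < t0 else t0 < t \<and> t < x)"
      and eq: "D j x = (\<Sum>k<m-j. (D (j+k) t0 / fact k) * (x - t0)^k) + (D (j + (m-j)) t / fact (m-j)) * (x - t0)^(m-j)"
      by blast
    have "(\<Sum>k<m-j. (D (j+k) t0 / fact k) * (x - t0)^k) = 0"
      by (intro sum.neutral) (auto simp: below)
    then have "D j x = D m t / fact (m - j) * (x - t0)^(m - j)" using eq jm by simp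
    moreover have "t \<noteq> t0" "\<bar>t - t0\<bar> \<le> \<bar>x - t0\<bar>" using t by (auto split: if_splits)
    ultimately show ?thesis by blast
  qed
  define Lv where "Lv j = (if j \<le> m then A / fact (m - j) else 0)" for j
  have ulim: "(u j \<longlongrightarrow> Lv j) (at t0)" for j
  proof (cases "j \<le> m")
    case True
    have LvA: "Lv j = A / fact (m - j)" using True by (simp add: Lv_def)
    show ?thesis unfolding LvA LIM_eq
    proof (intro allI impI)
      fix r :: real assume r: "r > 0"
      from Dc[of m] have "D m \<midarrow>t0\<rightarrow> A" by (simp add: isCont_def A_def)
      then obtain d where d: "d > 0" "\<And>y. y \<noteq> t0 \<and> norm (y - t0) < d \<Longrightarrow> norm (D m y - A) < r"
        using r unfolding LIM_eq by blast
      show "\<exists>s>0. \<forall>x. x \<noteq> t0 \<and> norm (x - t0) < s \<longrightarrow> norm (u j x - A / fact (m - j)) < r"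
      proof (intro exI[of _ "min d e"] conjI allI impI)
        show "0 < min d e" using d e by simp
        fix x assume x: "x \<noteq> t0 \<and> norm (x - t0) < min d e"
        then have xb: "x \<in> ball t0 e" by (simp add: dist_real_def abs_minus_commute)
        obtain \<xi> where xi: "\<xi> \<noteq> t0" "\<bar>\<xi> - t0\<bar> \<le> \<bar>x - t0\<bar>" "D j x = D m \<xi> / fact (m - j) * (x - t0)^(m - j)"
          using tay[OF True xb] x by blast
        have nz: "x - t0 \<noteq> 0" using x by simp
        have "u j x = D m \<xi> / fact (m - j) * ((x - t0)^(m - j) * (x - t0)^j) / (x - t0)^m"
          unfolding u_def xi(3) by (simp add: field_simps)
        also have "(x - t0)^(m - j) * (x - t0)^j = (x - t0)^m"
          using True by (simp add: power_add[symmetric])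
        finally have ux: "u j x = D m \<xi> / fact (m - j)" using nz by simp
        have "norm (D m \<xi> - A) < r" using d(2)[of \<xi>] xi x by auto
        moreover have "fact (m - j) \<ge> (1::real)" by simp
        moreover have "r \<le> r * fact (m - j)" using r by (simp add: mult_le_cancel_left1)
        ultimately have "\<bar>D m \<xi> - A\<bar> < r * fact (m - j)"
          by simp
        then have "\<bar>D m \<xi> - A\<bar> / fact (m - j) < r"
          by (simp add: divide_less_eq)
        then show "norm (u j x - A / fact (m - j)) < r" unfolding ux
          by (simp add: diff_divide_distrib[symmetric])
      qed
    qed
  next
    case False
    have LvA: "Lv j = 0" using False by (simp add: Lv_def)
    have "((\<lambda>x. D j x * (x - t0)^(j - m)) \<longlongrightarrow> D j t0 * (t0 - t0)^(j - m)) (at t0)"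
      by (intro tendsto_intros Dc[unfolded isCont_def])
    then have l0: "((\<lambda>x. D j x * (x - t0)^(j - m)) \<longlongrightarrow> 0) (at t0)" using False by (simp add: power_0_left)
    have ev: "\<forall>\<^sub>F x in at t0. D j x * (x - t0)^(j - m) = u j x"
      unfolding eventually_at
    proof (intro exI[of _ 1] conjI ballI impI)
      fix x assume "x \<noteq> t0 \<and> dist x t0 < 1"
      then have nz: "x - t0 \<noteq> 0" by simp
      have "(x - t0)^j = (x - t0)^(j-m) * (x - t0)^m" using False by (simp add: power_add[symmetric])
      then show "D j x * (x - t0)^(j - m) = u j x" unfolding u_def using nz by simp
    qed simp
    show ?thesis unfolding LvA by (rule Lim_transform_eventually[OF l0 ev])
  qed
  define Psi where "Psi x = PsiE (u 0 x) (u 1 x) (u 2 x) (u 3 x) (u 4 x) (u 5 x) (B 0 x) (B 1 x) (B 2 x) (B 3 x) (x - t0)" for x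
  have Psilim: "(Psi \<longlongrightarrow> PsiE (Lv 0) (Lv 1) (Lv 2) (Lv 3) (Lv 4) (Lv 5) (B 0 t0) (B 1 t0) (B 2 t0) (B 3 t0) (t0 - t0)) (at t0)"
    unfolding Psi_def PsiE_def pureE_def
    by (intro tendsto_intros ulim Bc[unfolded isCont_def])
  have Psi0: "\<forall>\<^sub>F x in at t0. Psi x = 0"
    unfolding eventually_at
  proof (intro exI[of _ e] conjI ballI impI)
    fix x assume x: "x \<noteq> t0 \<and> dist x t0 < e"
    then have xI: "x \<in> I" using e by (auto simp: dist_commute)
    have nz: "x - t0 \<noteq> 0" using x by simp
    have Dx: "D j x = u j x * (x - t0)^m / (x - t0)^j" for j
      unfolding u_def using nz by simp
    have "0 = stress a b x * (x - t0)^5" using assms(4) xI by (simp add: a_def b_def)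
    also have "\<dots> = stressE (u 0 x * (x - t0)^m) (u 1 x * (x - t0)^m / (x - t0)) (u 2 x * (x - t0)^m / (x - t0)^2)
       (u 3 x * (x - t0)^m / (x - t0)^3) (u 4 x * (x - t0)^m / (x - t0)^4) (u 5 x * (x - t0)^m / (x - t0)^5)
       (B 0 x) (B 1 x) (B 2 x) (B 3 x) * (x - t0)^5"
    proof -
      have se: "stress a b x = stressE (D 0 x) (D 1 x) (D 2 x) (D 3 x) (D 4 x) (D 5 x) (B 0 x) (B 1 x) (B 2 x) (B 3 x)"
        unfolding stress_eq D_def B_def by (rule refl)
      have d0: "D 0 x = u 0 x * (x - t0)^m" using Dx[of 0] by simp
      have d1: "D 1 x = u 1 x * (x - t0)^m / (x - t0)" using Dx[of 1] by simp
      show ?thesis unfolding se d0 d1 Dx[of 2] Dx[of 3] Dx[of 4] Dx[of 5] by (rule refl)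
    qed
    also have "\<dots> = ((x - t0)^m)^5 * Psi x"
      unfolding Psi_def by (rule stress_alg[OF nz])
    finally show "Psi x = 0" using nz by simp
  qed (use e in simp)
  have "PsiE (Lv 0) (Lv 1) (Lv 2) (Lv 3) (Lv 4) (Lv 5) (B 0 t0) (B 1 t0) (B 2 t0) (B 3 t0) (t0 - t0) = 0"
    using tendsto_unique[OF trivial_limit_at Psilim tendsto_eventually[OF Psi0]] .
  then have P0: "pureE (Lv 0) (Lv 1) (Lv 2) (Lv 3) (Lv 4) (Lv 5) = 0" by (simp add: PsiE_def)
  have Lvc: "Lv j = c * (\<Prod>i<j. (real m - real i))" for j
    unfolding Lv_def c_def by (rule Lv_eq)
  have L: "Lv 0 = c" "Lv 1 = c * real m" "Lv 2 = c * (real m * (real m - 1))"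
    "Lv 3 = c * (real m * (real m - 1) * (real m - 2))"
    "Lv 4 = c * (real m * (real m - 1) * (real m - 2) * (real m - 3))"
    "Lv 5 = c * (real m * (real m - 1) * (real m - 2) * (real m - 3) * (real m - 4))"
    by (simp_all add: Lvc eval_nat_numeral prod.lessThan_Suc mult_ac)
  have "-(c^5 * (8*real m + 100/9*real m^2 + 140/27*real m^3 + 80/81*real m^4 + 16/243*real m^5)) = 0"
    using pure_val[of c "real m"] P0 unfolding L by linarith
  moreover have "8*real m + 100/9*real m^2 + 140/27*real m^3 + 80/81*real m^4 + 16/243*real m^5 > 0"
    using m0 by (simp add: add_pos_nonneg)
  ultimately show False using cnz by simp
qed

end
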